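(* For all $n\ge0$, \[ p_n^2=p_n+2\sum_{k=0}^{n-5}\sum_{r=5}^{n-k}c_{r-5}p_k p_{n-k-r}^2 . \]
   Context: The Narayana's cows numbers $c_n$ are defined by $c_n=\delta_{n,0}+c_{n-1}+c_{n-3}$ for $n\ge0$, $c_n=0$ for $n<0$. The Padovan numbers $p_n$ are defined by $p_n=\delta_{n,0}+p_{n-2}+p_{n-3}$ for $n\ge0$, $p_n=0$ for $n<0$. $\delta_{i,j}$ is $1$ if $i=j$ and $0$ otherwise. Empty sums are $0$. *)

theory Defs
  imports Main
begin

fun cowN :: "nat \<Rightarrow> nat" where
  "cowN n = (if n = 0 then 1 else 0)
            + (if n \<ge> 1 then cowN (n - 1) else 0)
            + (if n \<ge> 3 then cowN (n - 3) else 0)"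

definition cow :: "int \<Rightarrow> int" where
  "cow n = (if n < 0 then 0 else int (cowN (nat n)))"

fun padN :: "nat \<Rightarrow> nat" where
  "padN n = (if n = 0 then 1 else 0)
            + (if n \<ge> 2 then padN (n - 2) else 0)
            + (if n \<ge> 3 then padN (n - 3) else 0)"

definition pad :: "int \<Rightarrow> int" where
  "pad n = (if n < 0 then 0 else int (padN (nat n)))"

end

theory Submission
  imports Defs "HOL-Computational_Algebra.Formal_Power_Series"
begin

unbundle fps_syntax

definition pp :: "nat \<Rightarrow> int" where "pp n = int (padN n)"
definition cc :: "nat \<Rightarrow> int" where "cc n = int (cowN n)"

lemma padN_eq: "padN n = (if n = 0 then 1 else 0)
            + (if n \<ge> 2 then padN (n - 2) else 0)
            + (if n \<ge> 3 then padN (n - 3) else 0)"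
  by (rule padN.simps)

lemma cowN_eq: "cowN n = (if n = 0 then 1 else 0)
            + (if n \<ge> 1 then cowN (n - 1) else 0)
            + (if n \<ge> 3 then cowN (n - 3) else 0)"
  by (rule cowN.simps)

declare padN.simps[simp del] cowN.simps[simp del]

lemma pp_rec: "pp (n+3) = pp (n+1) + pp n"
  unfolding pp_def by (subst padN_eq) simp

lemma pp_vals: "pp 0 = 1" "pp 1 = 0" "pp 2 = 1" "pp 3 = 1" "pp 4 = 1" "pp 5 = 2"
proof -
  have a: "padN 0 = 1" by (subst padN_eq) simp
  have b: "padN 1 = 0" by (subst padN_eq) simp
  have c: "padN 2 = 1" using a by (subst padN_eq) simp
  have d: "padN 3 = 1" using a b by (subst padN_eq) simp
  have e: "padN 4 = 1" using b c by (subst padN_eq) simp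
  have f: "padN 5 = 2" using c d by (subst padN_eq) simp
  show "pp 0 = 1" "pp 1 = 0" "pp 2 = 1" "pp 3 = 1" "pp 4 = 1" "pp 5 = 2"
    using a b c d e f by (simp_all add: pp_def)
qed

definition P :: "int fps" where "P = Abs_fps pp"
definition C :: "int fps" where "C = Abs_fps cc"
definition Q :: "int fps" where "Q = Abs_fps (\<lambda>n. (pp n)^2)"
definition R :: "int fps" where "R = Abs_fps (\<lambda>n. if n \<ge> 3 then 2 * pp (n-2) * pp (n-3) else 0)"

lemma coeff3: "((1 - fps_X^a - fps_X^b) * (F::int fps)) $ n
   = F $ n - (if n < a then 0 else F $ (n-a)) - (if n < b then 0 else F $ (n-b))"
  by (simp only: left_diff_distrib mult_1_left fps_sub_nth fps_X_power_mult_nth)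

lemma P_inv: "(1 - fps_X^2 - fps_X^3) * P = 1"
proof (rule fps_ext)
  fix n
  show "((1 - fps_X^2 - fps_X^3) * P) $ n = (1::int fps) $ n"
    unfolding coeff3 P_def pp_def by (subst (1) padN_eq) (auto simp: not_less)
qed

lemma C_inv: "(1 - fps_X^1 - fps_X^3) * C = 1"
proof (rule fps_ext)
  fix n
  show "((1 - fps_X^1 - fps_X^3) * C) $ n = (1::int fps) $ n"
    unfolding coeff3 C_def cc_def by (subst (1) cowN_eq) (auto simp: not_less)
qed

lemma R_eq: "(1 - fps_X^2 - fps_X^3) * Q - 1 = R"
proof (rule fps_ext)
  fix n
  show "((1 - fps_X^2 - fps_X^3) * Q - 1) $ n = R $ n"
  proof (cases "n \<ge> 3")
    case True
    then obtain m where m: "n = m + 3" by (metis add.commute le_add_diff_inverse)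
    show ?thesis unfolding coeff3 fps_sub_nth Q_def R_def m
      by (simp add: pp_rec power2_eq_square algebra_simps)
  next
    case False
    then have "n = 0 \<or> n = 1 \<or> n = 2" by auto
    then show ?thesis unfolding coeff3 fps_sub_nth Q_def R_def
      by (auto simp: pp_vals pp_vals[simplified])
  qed
qed

lemma pp_key: "2*pp(m+4)*pp(m+3) - 2*pp(m+3)*pp(m+2) - 2*pp(m+1)*pp m = 2*pp(m+1)^2"
proof -
  have a: "pp(m+4) = pp(m+2)+pp(m+1)" using pp_rec[of "m+1"] by (simp add: add.commute)
  have b: "pp(m+3) = pp(m+1)+pp m" using pp_rec[of m] by simp
  show ?thesis unfolding a b by (simp add: algebra_simps power2_eq_square)
qed

lemma R_rel: "(1 - fps_X^1 - fps_X^3) * R = 2 * fps_X^5 * Q"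
proof (rule fps_ext)
  fix n
  have two: "(2 * fps_X^5 * Q) $ n = 2 * (if n < 5 then 0 else Q $ (n - 5))"
    by (simp only: mult_2 distrib_right fps_add_nth fps_X_power_mult_nth)
  show "((1 - fps_X^1 - fps_X^3) * R) $ n = (2 * fps_X^5 * Q) $ n"
  proof (cases "n \<ge> 6")
    case True
    then obtain m where m: "n = m + 6" by (metis add.commute le_add_diff_inverse)
    show ?thesis unfolding coeff3 two unfolding Q_def R_def m
      using pp_key[of m] by (simp add: add.commute)
  next
    case False
    then have "n = 0 \<or> n = 1 \<or> n = 2 \<or> n = 3 \<or> n = 4 \<or> n = 5" by auto
    then show ?thesis unfolding coeff3 two unfolding Q_def R_def
      by (auto simp: pp_vals pp_vals[simplified])
  qed
qed

lemma main_fps: "Q = P + 2 * fps_X^5 * (P * (C * Q))"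
proof -
  let ?A = "1 - fps_X^1 - fps_X^3 :: int fps" and ?B = "1 - fps_X^2 - fps_X^3 :: int fps"
  have e: "?A * (?B * Q - 1) = 2 * fps_X^5 * Q" using R_eq R_rel by simp
  have "Q - P = (?A * C) * (?B * P) * Q - (?A * C) * P" using P_inv C_inv by simp
  also have "\<dots> = C * P * (?A * (?B * Q - 1))" by (simp add: algebra_simps)
  also have "\<dots> = 2 * fps_X^5 * (P * (C * Q))" unfolding e by (simp add: algebra_simps)
  finally show ?thesis by (simp add: algebra_simps)
qed

lemma main_nat: "(pp n)^2 = pp n + 2 * (if n < 5 then 0 else
   (\<Sum>i=0..n-5. pp i * (\<Sum>j=0..n-5-i. cc j * (pp (n-5-i-j))^2)))"
proof -
  have "Q $ n = (P + 2 * fps_X^5 * (P * (C * Q))) $ n" using main_fps by simp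
  also have "\<dots> = P $ n + 2 * (fps_X^5 * (P * (C * Q))) $ n"
    by (simp only: fps_add_nth mult_2 distrib_right mult.assoc)
  finally have "Q $ n = P $ n + 2 * (if n < 5 then 0 else (P * (C * Q)) $ (n - 5))"
    by (simp only: fps_X_power_mult_nth)
  then show ?thesis
    by (simp add: fps_mult_nth Q_def P_def C_def)
qed

lemma sum_int_shift: "sum f {a..a + int m} = (\<Sum>j=0..m. f (a + int j))"
proof -
  have "{a..a + int m} = (\<lambda>j. a + int j) ` {0..m}"
  proof
    show "{a..a + int m} \<subseteq> (\<lambda>j. a + int j) ` {0..m}"
    proof
      fix x assume "x \<in> {a..a + int m}"
      then show "x \<in> (\<lambda>j. a + int j) ` {0..m}"
        by (intro image_eqI[of _ _ "nat (x - a)"]) auto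
    qed
  qed auto
  moreover have "inj_on (\<lambda>j. a + int j) {0..m}" by (auto simp: inj_on_def)
  ultimately show ?thesis by (simp add: sum.reindex)
qed

theorem mainTheorem17:
  fixes n :: int
  assumes "n \<ge> 0"
  shows "(pad n)^2 = pad n + 2 * (\<Sum>k = 0..n - 5. \<Sum>r = 5..n - k.
            cow (r - 5) * pad k * (pad (n - k - r))^2)"
proof -
  obtain N where N: "n = int N" using assms by (metis nonneg_eq_int)
  have padi: "pad (int k) = pp k" for k by (simp add: pad_def pp_def)
  have cowi: "cow (int k) = cc k" for k by (simp add: cow_def cc_def)
  show ?thesis
  proof (cases "N < 5")
    case True
    then show ?thesis using main_nat[of N] by (simp add: N padi)
  next
    case False
    define M where "M = N - 5"
    have NM: "n - 5 = 0 + int M" using False by (simp add: N M_def)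
    have inner: "(\<Sum>r = 5..n - int i. cow (r - 5) * pad (int i) * (pad (n - int i - r))^2)
       = pp i * (\<Sum>j=0..M-i. cc j * (pp (M-i-j))^2)" if "i \<in> {0..M}" for i
    proof -
      have "n - int i = 5 + int (M - i)" using that False by (simp add: N M_def)
      then have "(\<Sum>r = 5..n - int i. cow (r - 5) * pad (int i) * (pad (n - int i - r))^2)
         = (\<Sum>j=0..M-i. cow (int j) * pad (int i) * (pad (int (M - i) - int j))^2)"
        by (simp add: sum_int_shift)
      also have "\<dots> = (\<Sum>j=0..M-i. cc j * pp i * (pp (M - i - j))^2)"
        by (intro sum.cong refl) (simp add: cowi padi flip: of_nat_diff)
      finally show ?thesis by (simp add: sum_distrib_left algebra_simps)
    qed
    have "(\<Sum>k = 0..n - 5. \<Sum>r = 5..n - k. cow (r - 5) * pad k * (pad (n - k - r))^2)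
       = (\<Sum>i=0..M. \<Sum>r = 5..n - int i. cow (r - 5) * pad (int i) * (pad (n - int i - r))^2)"
      unfolding NM sum_int_shift by simp
    also have "\<dots> = (\<Sum>i=0..M. pp i * (\<Sum>j=0..M-i. cc j * (pp (M-i-j))^2))"
      by (rule sum.cong) (auto simp: inner)
    finally show ?thesis using main_nat[of N] False by (simp add: N padi M_def)
  qed
qed

end
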